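(* Let $K\ge 2$ and $d\ge K-1$ be integers, let $n_1,\dots,n_K\ge 1$ be integers (arbitrary, possibly very different from one another, i.e. the class sizes may be imbalanced), let $N=\sum_{k=1}^K n_k$, and let $E_H>0$, $E_W>0$. Let $\mathbf{W}^*=[\mathbf{w}_1^*,\dots,\mathbf{w}_K^*]\in\mathbb{R}^{d\times K}$ be a fixed scaled simplex equiangular tight frame, i.e. $\mathbf{W}^*=\sqrt{E_W}\sqrt{\tfrac{K}{K-1}}\,\mathbf{U}\left(\mathbf{I}_K-\tfrac1K\mathbf{1}_K\mathbf{1}_K^T\right)$ for some $\mathbf{U}\in\mathbb{R}^{d\times K}$ with $\mathbf{U}^T\mathbf{U}=\mathbf{I}_K$; equivalently it satisfies ${\mathbf{w}_k^*}^T\mathbf{w}_{k'}^*=E_W\left(\tfrac{K}{K-1}\delta_{k,k'}-\tfrac{1}{K-1}\right)$ for all $k,k'\in\{1,\dots,K\}$. Consider the optimization problem over feature vectors $\mathbf{H}=(\mathbf{h}_{k,i})_{1\le k\le K,\,1\le i\le n_k}$, $\mathbf{h}_{k,i}\in\mathbb{R}^d$: $$\min_{\mathbf{H}}\ \frac1N\sum_{k=1}^K\sum_{i=1}^{n_k}\mathcal{L}_{CE}(\mathbf{h}_{k,i},\mathbf{W}^* )\quad\text{s.t.}\quad \|\mathbf{h}_{k,i}\|^2\le E_H\ \ \forall\, 1\le k\le K,\ 1\le i\le n_k,$$ where for a feature $\mathbf{h}_{k,i}$ of class $k$, $\mathcal{L}_{CE}(\mathbf{h}_{k,i},\mathbf{W}^*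 )=-\log\frac{\exp(\mathbf{h}_{k,i}^T\mathbf{w}_k^* )}{\sum_{j=1}^K\exp(\mathbf{h}_{k,i}^T\mathbf{w}_j^* )}$. Then every global minimizer $\mathbf{H}^*=(\mathbf{h}^*_{k,i})$ of this problem satisfies $${\mathbf{h}^*_{k,i}}^T\mathbf{w}^*_{k'}=\sqrt{E_HE_W}\left(\frac{K}{K-1}\delta_{k,k'}-\frac{1}{K-1}\right)\quad\text{for all } 1\le k,k'\le K,\ 1\le i\le n_k,$$ i.e. the optimal features form a simplex equiangular tight frame with the same directions as $\mathbf{W}^*$ and length $\sqrt{E_H}$, regardless of whether the class sizes $n_k$ are balanced.
   Context: $\delta_{k,k'}$ denotes the Kronecker delta ($1$ if $k=k'$, $0$ otherwise), $\mathbf{I}_K$ is the $K\times K$ identity matrix and $\mathbf{1}_K$ is the all-ones vector in $\mathbb{R}^K$. $\mathbf{h}_{k,i}$ represents the (last-layer) feature of the $i$-th training sample of class $k$; the classifier $\mathbf{W}^*$ is fixed and not optimized. $\|\cdot\|$ is the Euclidean norm. *)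

theory Defs
  imports "HOL-Analysis.Analysis"
begin

text \<open>Classes are indexed by k in {0..<K}; samples of class k by i in {0..<n k}.
  Features and classifier columns live in real^'d, with d = CARD('d).\<close>

definition CE_loss :: "nat \<Rightarrow> (nat \<Rightarrow> real^'d) \<Rightarrow> real^'d \<Rightarrow> nat \<Rightarrow> real" where
  "CE_loss K W h k = - ln (exp (h \<bullet> W k) / (\<Sum>j<K. exp (h \<bullet> W j)))"

definition CE_objective ::
  "nat \<Rightarrow> (nat \<Rightarrow> nat) \<Rightarrow> (nat \<Rightarrow> real^'d) \<Rightarrow> (nat \<Rightarrow> nat \<Rightarrow> real^'d) \<Rightarrow> real" where
  "CE_objective K n W H =
     (1 / real (\<Sum>k<K. n k)) * (\<Sum>k<K. \<Sum>i<n k. CE_loss K W (H k i) k)"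

definition feasible_features ::
  "nat \<Rightarrow> (nat \<Rightarrow> nat) \<Rightarrow> real \<Rightarrow> (nat \<Rightarrow> nat \<Rightarrow> real^'d) \<Rightarrow> bool" where
  "feasible_features K n E_H H \<longleftrightarrow> (\<forall>k<K. \<forall>i<n k. (norm (H k i))\<^sup>2 \<le> E_H)"

definition is_global_minimizer ::
  "nat \<Rightarrow> (nat \<Rightarrow> nat) \<Rightarrow> real \<Rightarrow> (nat \<Rightarrow> real^'d) \<Rightarrow> (nat \<Rightarrow> nat \<Rightarrow> real^'d) \<Rightarrow> bool" where
  "is_global_minimizer K n E_H W H \<longleftrightarrow>
     feasible_features K n E_H H \<and>
     (\<forall>H'. feasible_features K n E_H H' \<longrightarrow> CE_objective K n W H \<le> CE_objective K n W H')"

end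

theory Submission
  imports Defs
begin

lemma exp_tangent_sum:
  fixes a :: "nat \<Rightarrow> real" and J :: "nat set"
  assumes "finite J"
  shows "(\<Sum>j\<in>J. exp (a j)) \<ge> exp mu * (real (card J) + (\<Sum>j\<in>J. a j) - real (card J) * mu)"
proof -
  have "\<And>j. exp mu * (1 + (a j - mu)) \<le> exp (a j)"
  proof -
    fix j
    have "1 + (a j - mu) \<le> exp (a j - mu)" by (rule exp_ge_add_one_self)
    hence "exp mu * (1 + (a j - mu)) \<le> exp mu * exp (a j - mu)" by simp
    also have "\<dots> = exp (a j)" by (simp add: exp_diff)
    finally show "exp mu * (1 + (a j - mu)) \<le> exp (a j)" .
  qed
  hence "(\<Sum>j\<in>J. exp mu * (1 + (a j - mu))) \<le> (\<Sum>j\<in>J. exp (a j))" by (rule sum_mono)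
  moreover have "(\<Sum>j\<in>J. exp mu * (1 + (a j - mu))) = exp mu * (real (card J) + (\<Sum>j\<in>J. a j) - real (card J) * mu)"
    by (simp add: sum_distrib_left[symmetric] sum.distrib sum_subtractf algebra_simps)
  ultimately show ?thesis by simp
qed

lemma CE_loss_eq:
  "CE_loss K W h k = ln (\<Sum>j<K. exp (h \<bullet> W j - h \<bullet> W k))"
proof -
  have "(\<Sum>j<K. exp (h \<bullet> W j - h \<bullet> W k)) = (\<Sum>j<K. exp (h \<bullet> W j)) / exp (h \<bullet> W k)"
    by (simp add: exp_diff sum_divide_distrib)
  moreover have "- ln (exp (h \<bullet> W k) / S) = ln (S / exp (h \<bullet> W k))" for S :: real
  proof -
    have "- ln (exp (h \<bullet> W k) / S) = ln (inverse (exp (h \<bullet> W k) / S))" by (simp only: ln_inverse)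
    thus ?thesis by simp
  qed
  ultimately show ?thesis unfolding CE_loss_def by simp
qed

theorem theorem1:
  fixes K :: nat and n :: "nat \<Rightarrow> nat" and E_H E_W :: real
    and W :: "nat \<Rightarrow> real^'d" and H :: "nat \<Rightarrow> nat \<Rightarrow> real^'d"
  assumes K2: "K \<ge> 2"
    and dim: "CARD('d) \<ge> K - 1"
    and npos: "\<forall>k<K. n k \<ge> 1"
    and EH: "E_H > 0" and EW: "E_W > 0"
    and W_etf: "\<forall>k<K. \<forall>k'<K.
        W k \<bullet> W k' = E_W * (real K / (real K - 1) * (if k = k' then 1 else 0) - 1 / (real K - 1))"
    and opt: "is_global_minimizer K n E_H W H"
  shows "\<forall>k<K. \<forall>i<n k. \<forall>k'<K.
        H k i \<bullet> W k' = sqrt (E_H * E_W) * (real K / (real K - 1) * (if k = k' then 1 else 0) - 1 / (real K - 1))"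
proof -
  define s where "s = sqrt (E_H * E_W)"
  define c where "c = sqrt (E_H / E_W)"
  define mu where "mu = - real K * s / (real K - 1)"
  have K1: "real K - 1 > 0" using K2 by simp
  have cEW: "c * E_W = s"
  proof -
    have "c * E_W = sqrt (E_H / E_W) * sqrt (E_W * E_W)" unfolding c_def using EW by simp
    also have "\<dots> = sqrt (E_H / E_W * (E_W * E_W))" by (rule real_sqrt_mult[symmetric])
    also have "E_H / E_W * (E_W * E_W) = E_H * E_W" using EW by (simp add: field_simps)
    finally show ?thesis unfolding s_def .
  qed
  have cc: "c * c * E_W = E_H" unfolding c_def using EH EW by simp
  have Wkk: "W k \<bullet> W k = E_W" if "k < K" for k
  proof -
    have "W k \<bullet> W k = E_W * (real K / (real K - 1) - 1 / (real K - 1))" using W_etf that by simp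
    also have "real K / (real K - 1) - 1 / (real K - 1) = 1" using K1 by (simp add: diff_divide_distrib[symmetric])
    finally show ?thesis by simp
  qed
  have Wjk: "W j \<bullet> W k = - E_W / (real K - 1)" if "j < K" "k < K" "j \<noteq> k" for j k
  proof -
    have "W j \<bullet> W k = E_W * (- (1 / (real K - 1)))" using W_etf that by simp
    thus ?thesis by simp
  qed
  have sumW0: "(\<Sum>j<K. W j) = 0"
  proof -
    have col: "(\<Sum>j<K. W j) \<bullet> W k = 0" if "k < K" for k
    proof -
      have "(\<Sum>j<K. W j) \<bullet> W k = (\<Sum>j<K. W j \<bullet> W k)" by (simp add: inner_sum_left)
      also have "\<dots> = (\<Sum>j<K. E_W * (real K / (real K - 1) * (if j = k then 1 else 0) - 1 / (real K - 1)))"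
        using W_etf that by simp
      also have "\<dots> = (\<Sum>j<K. (if j = k then E_W * (real K / (real K - 1)) else 0) - E_W / (real K - 1))"
        by (rule sum.cong) (auto simp: right_diff_distrib)
      also have "\<dots> = E_W * (real K / (real K - 1)) - real K * (E_W / (real K - 1))"
        using that by (simp add: sum_subtractf)
      also have "\<dots> = 0" by simp
      finally show ?thesis .
    qed
    have "(\<Sum>j<K. W j) \<bullet> (\<Sum>j<K. W j) = 0"
      by (subst inner_sum_right) (simp add: col)
    thus ?thesis by simp
  qed
  have hsum0: "(\<Sum>j<K. h \<bullet> W j) = 0" for h :: "real^'d"
    using sumW0 by (simp add: inner_sum_right[symmetric])
  define hs where "hs = (\<lambda>k. c *\<^sub>R W k)"
  have hs_feas: "(norm (hs k))\<^sup>2 \<le> E_H" if "k < K" for k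
    unfolding hs_def power2_norm_eq_inner using Wkk[OF that] cc by (simp add: algebra_simps)
  define Tstar where "Tstar = 1 + (real K - 1) * exp mu"
  have Tpos: "Tstar > 0" unfolding Tstar_def using K1 by (simp add: add_pos_nonneg)
  have hs_loss: "CE_loss K W (hs k) k = ln Tstar" if "k < K" for k
  proof -
    have "(\<Sum>j<K. exp (hs k \<bullet> W j - hs k \<bullet> W k)) = (\<Sum>j<K. if j = k then 1 else exp mu)"
    proof (rule sum.cong)
      fix j assume j: "j \<in> {..<K}"
      show "exp (hs k \<bullet> W j - hs k \<bullet> W k) = (if j = k then 1 else exp mu)"
      proof (cases "j = k")
        case False
        have "hs k \<bullet> W j - hs k \<bullet> W k = c * (- E_W / (real K - 1)) - c * E_W"
          unfolding hs_def using Wjk[of k j] Wkk[OF that] j that False by auto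
        also have "\<dots> = mu" unfolding mu_def using K1 cEW[symmetric] by (simp add: field_simps)
        finally show ?thesis using False by simp
      qed simp
    qed simp
    also have "\<dots> = Tstar"
    proof -
      have "(\<Sum>j<K. if j = k then 1 else exp mu) = (\<Sum>j\<in>{..<K}. (if j = k then 1 - exp mu else 0) + exp mu)"
        by (rule sum.cong) auto
      also have "\<dots> = 1 - exp mu + real K * exp mu"
        using that by (simp add: sum.distrib)
      finally show ?thesis unfolding Tstar_def by (simp add: algebra_simps)
    qed
    finally show ?thesis by (simp add: CE_loss_eq)
  qed
  have lower: "(\<Sum>j<K. exp (h \<bullet> W j - h \<bullet> W k)) \<ge> 1 + exp mu * ((real K - 1) + real K * (s - h \<bullet> W k))"
    if k: "k < K" for h k
  proof -
    define J where "J = {..<K} - {k}"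
    have cardJ: "real (card J) = real K - 1" unfolding J_def using k K2 by (simp add: of_nat_diff)
    have split: "(\<Sum>j<K. f j) = f k + (\<Sum>j\<in>J. f j)" for f :: "nat \<Rightarrow> real"
      unfolding J_def using k by (simp add: sum.remove)
    have sa: "(\<Sum>j\<in>J. h \<bullet> W j - h \<bullet> W k) = - real K * (h \<bullet> W k)"
    proof -
      have "(\<Sum>j<K. h \<bullet> W j - h \<bullet> W k) = - real K * (h \<bullet> W k)"
        using hsum0[of h] by (simp add: sum_subtractf)
      thus ?thesis using split[of "\<lambda>j. h \<bullet> W j - h \<bullet> W k"] by simp
    qed
    have tang: "(\<Sum>j\<in>J. exp (h \<bullet> W j - h \<bullet> W k)) \<ge> exp mu * (real (card J) + (\<Sum>j\<in>J. h \<bullet> W j - h \<bullet> W k) - real (card J) * mu)"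
      by (rule exp_tangent_sum) (simp add: J_def)
    have m: "(real K - 1) * mu = - real K * s" unfolding mu_def using K1 by (simp add: field_simps)
    have eq: "real (card J) + (\<Sum>j\<in>J. h \<bullet> W j - h \<bullet> W k) - real (card J) * mu = (real K - 1) + real K * (s - h \<bullet> W k)"
      unfolding cardJ sa m by (simp add: algebra_simps)
    have "(\<Sum>j\<in>J. exp (h \<bullet> W j - h \<bullet> W k)) \<ge> exp mu * ((real K - 1) + real K * (s - h \<bullet> W k))"
      using tang unfolding eq .
    thus ?thesis using split[of "\<lambda>j. exp (h \<bullet> W j - h \<bullet> W k)"] by simp
  qed
  have CS: "h \<bullet> W k \<le> s" if "k < K" "(norm h)\<^sup>2 \<le> E_H" for h k
  proof -
    have "h \<bullet> W k \<le> norm h * norm (W k)" by (rule norm_cauchy_schwarz)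
    also have "\<dots> \<le> sqrt E_H * sqrt E_W"
      using Wkk[OF that(1)] real_le_rsqrt[OF that(2)] EH EW
      by (intro mult_mono) (auto simp: norm_eq_sqrt_inner)
    finally show ?thesis unfolding s_def by (simp add: real_sqrt_mult)
  qed
  have feasH: "feasible_features K n E_H H" and minH: "\<And>H'. feasible_features K n E_H H' \<Longrightarrow> CE_objective K n W H \<le> CE_objective K n W H'"
    using opt unfolding is_global_minimizer_def by auto
  have loss_ge: "CE_loss K W h k \<ge> ln Tstar" if "k < K" "(norm h)\<^sup>2 \<le> E_H" for h k
  proof -
    have "exp mu * (real K * (s - h \<bullet> W k)) \<ge> 0" using CS[OF that] by simp
    hence "Tstar \<le> (\<Sum>j<K. exp (h \<bullet> W j - h \<bullet> W k))"
      using lower[OF that(1), of h] unfolding Tstar_def by (simp add: algebra_simps)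
    thus ?thesis using Tpos by (simp add: CE_loss_eq)
  qed
  have loss_gt: "CE_loss K W h k > ln Tstar" if "k < K" "(norm h)\<^sup>2 \<le> E_H" "h \<bullet> W k < s" for h k
  proof -
    have "exp mu * (real K * (s - h \<bullet> W k)) > 0" using that(3) K2 by simp
    hence "Tstar < (\<Sum>j<K. exp (h \<bullet> W j - h \<bullet> W k))"
      using lower[OF that(1), of h] unfolding Tstar_def by (simp add: algebra_simps)
    thus ?thesis using Tpos by (simp add: CE_loss_eq)
  qed
  have eq_s: "H k i \<bullet> W k = s" if "k < K" "i < n k" for k i
  proof (rule ccontr)
    assume ne: "H k i \<bullet> W k \<noteq> s"
    have fk: "(norm (H k i))\<^sup>2 \<le> E_H" using feasH that unfolding feasible_features_def by auto
    have lt: "H k i \<bullet> W k < s" using CS[OF that(1) fk] ne by simp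
    define H' where "H' = (\<lambda>(k::nat) (i::nat). hs k)"
    have feas': "feasible_features K n E_H H'" unfolding feasible_features_def H'_def using hs_feas by auto
    have "(\<Sum>k<K. \<Sum>i<n k. CE_loss K W (H' k i) k) < (\<Sum>k<K. \<Sum>i<n k. CE_loss K W (H k i) k)"
    proof (rule sum_strict_mono_ex1)
      show "\<forall>x\<in>{..<K}. (\<Sum>i<n x. CE_loss K W (H' x i) x) \<le> (\<Sum>i<n x. CE_loss K W (H x i) x)"
      proof
        fix x assume x: "x \<in> {..<K}"
        show "(\<Sum>i<n x. CE_loss K W (H' x i) x) \<le> (\<Sum>i<n x. CE_loss K W (H x i) x)"
          using x feasH unfolding H'_def feasible_features_def
          by (intro sum_mono) (simp add: hs_loss loss_ge)
      qed
      show "\<exists>a\<in>{..<K}. (\<Sum>i<n a. CE_loss K W (H' a i) a) < (\<Sum>i<n a. CE_loss K W (H a i) a)"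
      proof (intro bexI)
        show "(\<Sum>i<n k. CE_loss K W (H' k i) k) < (\<Sum>i<n k. CE_loss K W (H k i) k)"
        proof (rule sum_strict_mono_ex1)
          show "\<forall>x\<in>{..<n k}. CE_loss K W (H' k x) k \<le> CE_loss K W (H k x) k"
            using that feasH unfolding H'_def feasible_features_def by (simp add: hs_loss loss_ge)
          show "\<exists>a\<in>{..<n k}. CE_loss K W (H' k a) k < CE_loss K W (H k a) k"
            using that fk lt loss_gt[OF that(1) fk lt] unfolding H'_def by (auto simp: hs_loss)
        qed simp
      qed (use that in simp)
    qed simp
    moreover have "real (\<Sum>k<K. n k) > 0"
    proof -
      have "n 0 \<ge> 1" using npos K2 by simp
      moreover have "n 0 \<le> (\<Sum>k<K. n k)" using K2 by (intro member_le_sum) auto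
      ultimately have "0 < (\<Sum>k<K. n k)" by linarith
      thus ?thesis by (simp only: of_nat_0_less_iff)
    qed
    ultimately have "CE_objective K n W H' < CE_objective K n W H"
      unfolding CE_objective_def by (simp add: divide_strict_right_mono)
    with minH[OF feas'] show False by simp
  qed
  have Hhs: "H k i = hs k" if "k < K" "i < n k" for k i
  proof -
    have fk: "(norm (H k i))\<^sup>2 \<le> E_H" using feasH that unfolding feasible_features_def by auto
    have "(H k i - hs k) \<bullet> (H k i - hs k) = H k i \<bullet> H k i - 2 * c * (H k i \<bullet> W k) + c * c * (W k \<bullet> W k)"
      unfolding hs_def by (simp add: algebra_simps inner_commute)
    also have "\<dots> \<le> 0"
    proof -
      have cs: "c * s = E_H" using cEW cc by (metis mult.assoc)
      have "H k i \<bullet> H k i \<le> E_H" using fk unfolding power2_norm_eq_inner .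
      thus ?thesis using eq_s[OF that] Wkk[OF that(1)] cc cs by (simp add: mult.assoc)
    qed
    finally show ?thesis by (metis inner_ge_zero order_antisym inner_eq_zero_iff right_minus_eq)
  qed
  show ?thesis
  proof (intro allI impI)
    fix k i k' assume k: "k < K" and i: "i < n k" and k': "k' < K"
    have "H k i \<bullet> W k' = c * (W k \<bullet> W k')" using Hhs[OF k i] unfolding hs_def by simp
    also have "\<dots> = c * E_W * (real K / (real K - 1) * (if k = k' then 1 else 0) - 1 / (real K - 1))"
      using W_etf k k' by simp
    finally show "H k i \<bullet> W k' = sqrt (E_H * E_W) * (real K / (real K - 1) * (if k = k' then 1 else 0) - 1 / (real K - 1))"
      using cEW unfolding s_def by simp
  qed
qed

end
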